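(* Consider the Disjoint Domination Game in which Dom is allowed to pass (in any turn except the very first move of the game) but Sepy is not allowed to pass. Then: (1) for every finite simple graph $G$ without isolated vertices, Dom has a winning strategy in the Sepy-start game on $G$; (2) for every finite simple graph $G$ without isolated vertices that has at least one Dom-win component, Dom has a winning strategy in the Dom-start game on $G$.
   Context: For a vertex $v$, $N[v]$ denotes its closed neighborhood. The Disjoint Domination Game on an isolate-free graph $G$ is played by Dom and Sepy with colors $p$ and $b$; $V_p,V_b$ denote the current sets of vertices of each color. Players alternate; either player may use either color. A move chooses a vertex $v$ and a color $c$ such that (i) $v$ is uncolored and (ii) some $u\in N[v]$ satisfies $N[u]\cap V_c=\emptyset$ (before the move); then $v$ gets color $c$. A player must make a legal move on his turn whenever one is available, unless he is the player allowed to pass (passing is never allowed on the first move of the game). The game ends as soon as either (s* ) some vertex $v$ has $N[v]\subseteq V_p$ or $N[v]\subseteq V_b$ — Sepy wins; or (d* ) both $V_p$ and $V_b$ are dominating sets of $G$ — Dom wins. In the Dom-start (Sepy-start) game Dom (Sepy) moves first. A Dom-win component of $G$ is a connected component $H$ of $G$ such that Dom has a winning strategy in the Dom-start Disjoint Domination Game (without passing) played on $H$ alone. *)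

theory Defs
  imports Main
begin

definition simple_graph :: "'a set \<Rightarrow> ('a \<Rightarrow> 'a \<Rightarrow> bool) \<Rightarrow> bool" where
  "simple_graph V E \<longleftrightarrow> finite V \<and> (\<forall>u v. E u v \<longrightarrow> u \<in> V \<and> v \<in> V)
     \<and> (\<forall>u v. E u v \<longrightarrow> E v u) \<and> (\<forall>v. \<not> E v v)"

definition isolate_free :: "'a set \<Rightarrow> ('a \<Rightarrow> 'a \<Rightarrow> bool) \<Rightarrow> bool" where
  "isolate_free V E \<longleftrightarrow> (\<forall>v\<in>V. \<exists>u. E v u)"

definition cnbhd :: "('a \<Rightarrow> 'a \<Rightarrow> bool) \<Rightarrow> 'a \<Rightarrow> 'a set" where
  "cnbhd E v = {u. u = v \<or> E v u}"

datatype color = Pcol | Bcol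

definition colset :: "color \<Rightarrow> 'a set \<Rightarrow> 'a set \<Rightarrow> 'a set" where
  "colset c P B = (case c of Pcol \<Rightarrow> P | Bcol \<Rightarrow> B)"

definition legal_move :: "'a set \<Rightarrow> ('a \<Rightarrow> 'a \<Rightarrow> bool) \<Rightarrow> 'a set \<Rightarrow> 'a set \<Rightarrow> 'a \<Rightarrow> color \<Rightarrow> bool" where
  "legal_move V E P B v c \<longleftrightarrow> v \<in> V \<and> v \<notin> P \<and> v \<notin> B
     \<and> (\<exists>u\<in>cnbhd E v. cnbhd E u \<inter> colset c P B = {})"

definition do_move :: "'a set \<Rightarrow> 'a set \<Rightarrow> 'a \<Rightarrow> color \<Rightarrow> 'a set \<times> 'a set" where
  "do_move P B v c = (case c of Pcol \<Rightarrow> (insert v P, B) | Bcol \<Rightarrow> (P, insert v B))"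

definition sepy_end :: "'a set \<Rightarrow> ('a \<Rightarrow> 'a \<Rightarrow> bool) \<Rightarrow> 'a set \<Rightarrow> 'a set \<Rightarrow> bool" where
  "sepy_end V E P B \<longleftrightarrow> (\<exists>v\<in>V. cnbhd E v \<subseteq> P \<or> cnbhd E v \<subseteq> B)"

definition dom_end :: "'a set \<Rightarrow> ('a \<Rightarrow> 'a \<Rightarrow> bool) \<Rightarrow> 'a set \<Rightarrow> 'a set \<Rightarrow> bool" where
  "dom_end V E P B \<longleftrightarrow> (\<forall>v\<in>V. cnbhd E v \<inter> P \<noteq> {} \<and> cnbhd E v \<inter> B \<noteq> {})"

text \<open>Arguments: dom_turn (Dom to move?), first (is this the first move of the game?), P, B.
  Since every play is finite (each Sepy move colours a vertex and Dom cannot pass twice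
  in a row without a Sepy move in between), the inductive (least fixed point) notion
  coincides with the existence of a winning strategy.\<close>
inductive dom_wins :: "'a set \<Rightarrow> ('a \<Rightarrow> 'a \<Rightarrow> bool) \<Rightarrow> bool \<Rightarrow> bool \<Rightarrow> bool \<Rightarrow> 'a set \<Rightarrow> 'a set \<Rightarrow> bool"
  for V E dom_pass where
  ended: "\<not> sepy_end V E P B \<Longrightarrow> dom_end V E P B \<Longrightarrow> dom_wins V E dom_pass t f P B"
| dom_move: "\<not> sepy_end V E P B \<Longrightarrow> \<not> dom_end V E P B \<Longrightarrow> legal_move V E P B v c \<Longrightarrow>
     dom_wins V E dom_pass False False (fst (do_move P B v c)) (snd (do_move P B v c)) \<Longrightarrow>
     dom_wins V E dom_pass True f P B"
| dom_passes: "\<not> sepy_end V E P B \<Longrightarrow> \<not> dom_end V E P B \<Longrightarrow> dom_pass \<Longrightarrow> \<not> f \<Longrightarrow>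
     dom_wins V E dom_pass False False P B \<Longrightarrow>
     dom_wins V E dom_pass True f P B"
| sepy_move: "\<not> sepy_end V E P B \<Longrightarrow> \<not> dom_end V E P B \<Longrightarrow>
     (\<forall>v c. legal_move V E P B v c \<longrightarrow>
        dom_wins V E dom_pass True False (fst (do_move P B v c)) (snd (do_move P B v c))) \<Longrightarrow>
     dom_wins V E dom_pass False f P B"

definition dom_start_win :: "'a set \<Rightarrow> ('a \<Rightarrow> 'a \<Rightarrow> bool) \<Rightarrow> bool \<Rightarrow> bool" where
  "dom_start_win V E dom_pass = dom_wins V E dom_pass True True {} {}"

definition sepy_start_win :: "'a set \<Rightarrow> ('a \<Rightarrow> 'a \<Rightarrow> bool) \<Rightarrow> bool \<Rightarrow> bool" where
  "sepy_start_win V E dom_pass = dom_wins V E dom_pass False True {} {}"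

definition component :: "'a set \<Rightarrow> ('a \<Rightarrow> 'a \<Rightarrow> bool) \<Rightarrow> 'a set \<Rightarrow> bool" where
  "component V E C \<longleftrightarrow> C \<subseteq> V \<and> C \<noteq> {} \<and> (\<forall>x\<in>C. \<forall>y. E x y \<longrightarrow> y \<in> C)
     \<and> (\<forall>x\<in>C. \<forall>y\<in>C. E\<^sup>*\<^sup>* x y)"

definition restrict_edges :: "('a \<Rightarrow> 'a \<Rightarrow> bool) \<Rightarrow> 'a set \<Rightarrow> 'a \<Rightarrow> 'a \<Rightarrow> bool" where
  "restrict_edges E C = (\<lambda>x y. x \<in> C \<and> y \<in> C \<and> E x y)"

definition dom_win_component :: "'a set \<Rightarrow> ('a \<Rightarrow> 'a \<Rightarrow> bool) \<Rightarrow> 'a set \<Rightarrow> bool" where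
  "dom_win_component V E C \<longleftrightarrow> component V E C \<and> dom_start_win C (restrict_edges E C) False"

end

theory Submission
  imports Defs
begin

definition opp :: "color \<Rightarrow> color" where
  "opp c = (case c of Pcol \<Rightarrow> Bcol | Bcol \<Rightarrow> Pcol)"

lemma color_cases: "d = c \<or> d = opp c"
  by (cases c; cases d) (auto simp: opp_def)

lemma all_color: "(\<forall>d. Q d) \<longleftrightarrow> Q c \<and> Q (opp c)"
  using color_cases by metis

lemma ex_color: "(\<exists>d. Q d) \<longleftrightarrow> Q c \<or> Q (opp c)"
  using color_cases by metis

lemma colset_do_same: "colset c (fst (do_move P B v c)) (snd (do_move P B v c)) = insert v (colset c P B)"
  by (cases c) (auto simp: colset_def do_move_def)

lemma colset_do_opp: "colset (opp c) (fst (do_move P B v c)) (snd (do_move P B v c)) = colset (opp c) P B"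
  by (cases c) (auto simp: colset_def do_move_def opp_def)

lemma union_do: "fst (do_move P B v c) \<union> snd (do_move P B v c) = insert v (P \<union> B)"
  by (cases c) (auto simp: do_move_def)

lemma PB_colsets: "P \<union> B = colset c P B \<union> colset (opp c) P B"
  by (cases c) (auto simp: colset_def opp_def)

lemma disj_colset: "P \<inter> B = {} \<Longrightarrow> colset c P B \<inter> colset (opp c) P B = {}"
  by (cases c) (auto simp: colset_def opp_def)

lemma do_disj: "P \<inter> B = {} \<Longrightarrow> v \<notin> P \<Longrightarrow> v \<notin> B \<Longrightarrow> fst (do_move P B v c) \<inter> snd (do_move P B v c) = {}"
  by (cases c) (auto simp: do_move_def)

lemma do_sub: "P \<subseteq> V \<Longrightarrow> B \<subseteq> V \<Longrightarrow> v \<in> V \<Longrightarrow> fst (do_move P B v c) \<subseteq> V \<and> snd (do_move P B v c) \<subseteq> V"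
  by (cases c) (auto simp: do_move_def)

lemma do_mono: "P \<subseteq> fst (do_move P B v c) \<and> B \<subseteq> snd (do_move P B v c)"
  by (cases c) (auto simp: do_move_def)

lemma do_inter_in: "v \<in> C \<Longrightarrow> fst (do_move (P \<inter> C) (B \<inter> C) v c) = fst (do_move P B v c) \<inter> C
   \<and> snd (do_move (P \<inter> C) (B \<inter> C) v c) = snd (do_move P B v c) \<inter> C"
  by (cases c) (auto simp: do_move_def)

lemma do_inter_out: "v \<notin> C \<Longrightarrow> fst (do_move P B v c) \<inter> C = P \<inter> C \<and> snd (do_move P B v c) \<inter> C = B \<inter> C"
  by (cases c) (auto simp: do_move_def)

lemma colset_inter: "colset c (P \<inter> C) (B \<inter> C) = colset c P B \<inter> C"
  by (cases c) (auto simp: colset_def)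

lemma colset_sub: "colset c P B \<subseteq> P \<union> B"
  by (cases c) (auto simp: colset_def)

lemma all_colset: "(\<forall>d. Q (colset d P B)) \<longleftrightarrow> Q P \<and> Q B"
proof
  assume a: "\<forall>d. Q (colset d P B)"
  show "Q P \<and> Q B" using a[rule_format, of Pcol] a[rule_format, of Bcol] by (simp add: colset_def)
next
  assume a: "Q P \<and> Q B"
  show "\<forall>d. Q (colset d P B)"
  proof
    fix d show "Q (colset d P B)" using a by (cases d) (simp_all add: colset_def)
  qed
qed

lemma ex_colset: "(\<exists>d. Q (colset d P B)) \<longleftrightarrow> Q P \<or> Q B"
  using all_colset[of "\<lambda>X. \<not> Q X" P B] by blast

lemma sepy_end_iff: "sepy_end V E P B \<longleftrightarrow> (\<exists>v\<in>V. \<exists>d. cnbhd E v \<subseteq> colset d P B)"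
  unfolding sepy_end_def ex_colset ..

lemma dom_end_iff: "dom_end V E P B \<longleftrightarrow> (\<forall>v\<in>V. \<forall>d. cnbhd E v \<inter> colset d P B \<noteq> {})"
proof -
  have h: "\<And>v. (\<forall>d. cnbhd E v \<inter> colset d P B \<noteq> {}) \<longleftrightarrow> cnbhd E v \<inter> P \<noteq> {} \<and> cnbhd E v \<inter> B \<noteq> {}"
    by (rule all_colset)
  show ?thesis unfolding dom_end_def h ..
qed

lemma in_cnbhd: "v \<in> cnbhd E v" by (simp add: cnbhd_def)
lemma mem_cnbhd: "u \<in> cnbhd E v \<longleftrightarrow> u = v \<or> E v u" by (simp add: cnbhd_def)

lemma dom_wins_nse: "dom_wins V E dp t f P B \<Longrightarrow> \<not> sepy_end V E P B"
  by (induction rule: dom_wins.induct) auto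

lemma legal_notend: "legal_move C (restrict_edges E C) P B v c \<Longrightarrow> \<not> dom_end C (restrict_edges E C) P B"
  unfolding legal_move_def dom_end_iff
  by (auto simp: mem_cnbhd restrict_edges_def) blast+

definition Kout :: "'a set \<Rightarrow> ('a \<Rightarrow> 'a \<Rightarrow> bool) \<Rightarrow> 'a set \<Rightarrow> 'a set \<Rightarrow> 'a set \<Rightarrow> bool" where
  "Kout V E C P B \<longleftrightarrow> (\<forall>w\<in>V-C. w \<in> P \<union> B \<longrightarrow> (\<forall>d. cnbhd E w \<inter> colset d P B \<noteq> {}))"

definition closedC :: "('a \<Rightarrow> 'a \<Rightarrow> bool) \<Rightarrow> 'a set \<Rightarrow> bool" where
  "closedC E C \<longleftrightarrow> (\<forall>x\<in>C. \<forall>y. E x y \<longrightarrow> y \<in> C)"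

lemma cnbhd_C: "closedC E C \<Longrightarrow> v \<in> C \<Longrightarrow> cnbhd E v \<subseteq> C"
  by (auto simp: closedC_def mem_cnbhd)

lemma cnbhd_restr: "closedC E C \<Longrightarrow> v \<in> C \<Longrightarrow> cnbhd (restrict_edges E C) v = cnbhd E v"
  by (auto simp: closedC_def cnbhd_def restrict_edges_def)

lemma out_nbr: "closedC E C \<Longrightarrow> simple_graph V E \<Longrightarrow> w \<notin> C \<Longrightarrow> E w u \<Longrightarrow> u \<notin> C"
  by (auto simp: closedC_def simple_graph_def)

lemma out_cnbhd: "closedC E C \<Longrightarrow> simple_graph V E \<Longrightarrow> w \<notin> C \<Longrightarrow> cnbhd E w \<inter> C = {}"
  using out_nbr by (fastforce simp: mem_cnbhd)

lemma legal_C: "closedC E C \<Longrightarrow> C \<subseteq> V \<Longrightarrow> v \<in> C \<Longrightarrow>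
   legal_move C (restrict_edges E C) (P \<inter> C) (B \<inter> C) v c \<longleftrightarrow> legal_move V E P B v c"
proof -
  assume cl: "closedC E C" and CV: "C \<subseteq> V" and v: "v \<in> C"
  have "(\<exists>u\<in>cnbhd (restrict_edges E C) v. cnbhd (restrict_edges E C) u \<inter> colset c (P \<inter> C) (B \<inter> C) = {})
     \<longleftrightarrow> (\<exists>u\<in>cnbhd E v. cnbhd E u \<inter> colset c P B = {})"
  proof -
    have "\<forall>u\<in>cnbhd E v. cnbhd (restrict_edges E C) u \<inter> colset c (P \<inter> C) (B \<inter> C) = cnbhd E u \<inter> colset c P B"
    proof
      fix u assume "u \<in> cnbhd E v"
      hence u: "u \<in> C" using cnbhd_C[OF cl v] by auto
      show "cnbhd (restrict_edges E C) u \<inter> colset c (P \<inter> C) (B \<inter> C) = cnbhd E u \<inter> colset c P B"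
        unfolding cnbhd_restr[OF cl u] colset_inter using cnbhd_C[OF cl u] by blast
    qed
    thus ?thesis using cnbhd_restr[OF cl v] by auto
  qed
  thus ?thesis unfolding legal_move_def using v CV by auto
qed

lemma opp_opp[simp]: "opp (opp c) = c" by (cases c) (auto simp: opp_def)

lemma colset_mono: "P \<subseteq> P' \<Longrightarrow> B \<subseteq> B' \<Longrightarrow> colset d P B \<subseteq> colset d P' B'"
  by (cases d) (auto simp: colset_def)

inductive_cases sepyE: "dom_wins V E dp False f P B"
inductive_cases domE: "dom_wins V E dp True f P B"

lemma sepy_next: "dom_wins V E dp False f P B \<Longrightarrow> legal_move V E P B v c \<Longrightarrow>
   dom_end V E P B \<or> dom_wins V E dp True False (fst (do_move P B v c)) (snd (do_move P B v c))"
  by (erule sepyE) auto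

lemma dom_next: "dom_wins V E False True f P B \<Longrightarrow> (\<not> sepy_end V E P B \<and> dom_end V E P B) \<or>
   (\<exists>w d. \<not> sepy_end V E P B \<and> \<not> dom_end V E P B \<and> legal_move V E P B w d \<and>
      dom_wins V E False False False (fst (do_move P B w d)) (snd (do_move P B w d)))"
  by (erule domE) auto

lemma card_dec: "finite V \<Longrightarrow> v \<in> V \<Longrightarrow> v \<notin> X \<Longrightarrow> v \<in> Y \<Longrightarrow> X \<subseteq> Y \<Longrightarrow> card (V - Y) < card (V - X)"
  by (rule psubset_card_mono) auto

lemma Kout_mono: "Kout V E C P B \<Longrightarrow> P \<subseteq> P' \<Longrightarrow> B \<subseteq> B' \<Longrightarrow> (P' \<union> B') - (P \<union> B) \<subseteq> C \<Longrightarrow> Kout V E C P' B'"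
  unfolding Kout_def using colset_mono by blast

lemma H_nse:
  assumes sg: "simple_graph V E" and cl: "closedC E C"
    and K: "Kout V E C P B" and dj: "P \<inter> B = {}"
    and nC: "\<not> sepy_end C (restrict_edges E C) (P \<inter> C) (B \<inter> C)"
  shows "\<not> sepy_end V E P B"
proof
  assume "sepy_end V E P B"
  then obtain w d where w: "w \<in> V" and sub: "cnbhd E w \<subseteq> colset d P B" by (auto simp: sepy_end_iff)
  show False
  proof (cases "w \<in> C")
    case True
    have "cnbhd (restrict_edges E C) w \<subseteq> colset d (P \<inter> C) (B \<inter> C)"
      unfolding cnbhd_restr[OF cl True] colset_inter using cnbhd_C[OF cl True] sub by blast
    thus False using nC True by (auto simp: sepy_end_iff)
  next
    case False
    have "w \<in> P \<union> B" using sub in_cnbhd[of w E] colset_sub[of d P B] by blast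
    hence "cnbhd E w \<inter> colset (opp d) P B \<noteq> {}" using K w False by (auto simp: Kout_def)
    thus False using sub disj_colset[OF dj, of d] by blast
  qed
qed

lemma nse_out:
  assumes sg: "simple_graph V E" and iso: "isolate_free V E" and cl: "closedC E C"
    and vC: "v \<notin> C" and lg: "legal_move V E P B v c"
    and K: "Kout V E C P B" and dj: "P \<inter> B = {}"
    and nseC: "\<not> sepy_end C (restrict_edges E C) (P \<inter> C) (B \<inter> C)"
  shows "\<not> sepy_end V E (fst (do_move P B v c)) (snd (do_move P B v c))"
proof
  define P' where "P' = fst (do_move P B v c)"
  define B' where "B' = snd (do_move P B v c)"
  have irr: "\<And>x. \<not> E x x" using sg by (auto simp: simple_graph_def)
  have v: "v \<in> V" "v \<notin> P" "v \<notin> B" using lg by (auto simp: legal_move_def)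
  have dj': "P' \<inter> B' = {}" using do_disj[OF dj v(2,3), of c] unfolding P'_def B'_def by auto
  have mono': "P \<subseteq> P'" "B \<subseteq> B'" using do_mono[of P B v c] unfolding P'_def B'_def by auto
  have un': "P' \<union> B' = insert v (P \<union> B)" using union_do[of P B v c] unfolding P'_def B'_def by auto
  have cs': "colset c P' B' = insert v (colset c P B)" using colset_do_same[of c P B v] unfolding P'_def B'_def by auto
  have co': "colset (opp c) P' B' = colset (opp c) P B" using colset_do_opp[of c P B v] unfolding P'_def B'_def by auto
  assume "sepy_end V E (fst (do_move P B v c)) (snd (do_move P B v c))"
  hence "sepy_end V E P' B'" unfolding P'_def B'_def .
  then obtain w d where w: "w \<in> V" and sub: "cnbhd E w \<subseteq> colset d P' B'" unfolding sepy_end_iff by blast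
  have dcases: "d = c \<or> d = opp c" using color_cases by metis
  show False
  proof (cases "w \<in> C")
    case True
    have "cnbhd E w \<subseteq> colset d P B"
    proof
      fix u assume u: "u \<in> cnbhd E w"
      have "u \<in> C" using u cnbhd_C[OF cl True] by blast
      hence uv: "u \<noteq> v" using vC by blast
      have uin: "u \<in> colset d P' B'" using u sub by blast
      show "u \<in> colset d P B"
      proof (cases "d = c")
        case True thus ?thesis using uin cs' uv by simp
      next
        case False hence "d = opp c" using dcases by blast
        thus ?thesis using uin co' by simp
      qed
    qed
    hence "cnbhd (restrict_edges E C) w \<subseteq> colset d (P \<inter> C) (B \<inter> C)"
      unfolding cnbhd_restr[OF cl True] colset_inter using cnbhd_C[OF cl True] by blast
    thus False using nseC True unfolding sepy_end_iff by blast
  next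
    case wC: False
    show False
    proof (cases "w = v")
      case wv: True
      show False
      proof (cases "d = c")
        case dc: True
        obtain u where u: "u \<in> cnbhd E v" and uc: "cnbhd E u \<inter> colset c P B = {}"
          using lg unfolding legal_move_def by blast
        obtain y where y: "E v y" using iso v(1) unfolding isolate_free_def by blast
        have yv: "y \<noteq> v" using y irr by blast
        have "y \<in> cnbhd E v" using y by (simp add: mem_cnbhd)
        hence "y \<in> insert v (colset c P B)" using sub wv dc cs' by blast
        hence yc: "y \<in> colset c P B" using yv by blast
        show False
        proof (cases "u = v")
          case True
          thus False using uc yc \<open>y \<in> cnbhd E v\<close> by blast
        next
          case False
          have "u \<in> insert v (colset c P B)" using u sub wv dc cs' by blast
          hence "u \<in> colset c P B" using False by blast
          thus False using uc in_cnbhd[of u E] by blast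
        qed
      next
        case False
        hence "d = opp c" using dcases by blast
        hence "v \<in> colset (opp c) P B" using sub wv co' in_cnbhd[of v E] by blast
        thus False using colset_sub[of "opp c" P B] v by blast
      qed
    next
      case False
      have "w \<in> colset d P' B'" using sub in_cnbhd[of w E] by blast
      hence "w \<in> P' \<union> B'" using colset_sub[of d P' B'] by blast
      hence wPB: "w \<in> P \<union> B" using un' False by blast
      have "\<forall>d. cnbhd E w \<inter> colset d P B \<noteq> {}" using K w wC wPB unfolding Kout_def by blast
      hence "cnbhd E w \<inter> colset (opp d) P B \<noteq> {}" by blast
      hence "cnbhd E w \<inter> colset (opp d) P' B' \<noteq> {}" using colset_mono[OF mono', of "opp d"] by blast
      thus False using sub disj_colset[OF dj', of d] by blast
    qed
  qed
qed

lemma L: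
  assumes sg: "simple_graph V E" and iso: "isolate_free V E" and CV: "C \<subseteq> V" and cl: "closedC E C"
  shows "P \<subseteq> V \<Longrightarrow> B \<subseteq> V \<Longrightarrow> P \<inter> B = {} \<Longrightarrow> Kout V E C P B \<Longrightarrow>
     dom_wins C (restrict_edges E C) False False fc (P \<inter> C) (B \<inter> C) \<Longrightarrow> dom_wins V E True False f P B"
proof (induction "card (V - (P \<union> B))" arbitrary: P B fc f rule: less_induct)
  case less
  note IH = less.hyps
  have finV: "finite V" using sg by (simp add: simple_graph_def)
  have sym: "\<And>x y. E x y \<Longrightarrow> E y x" and EV: "\<And>x y. E x y \<Longrightarrow> y \<in> V" and irr: "\<And>x. \<not> E x x"
    using sg by (auto simp: simple_graph_def)
  have nse: "\<not> sepy_end V E P B"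
    using H_nse[OF sg cl less.prems(4) less.prems(3)] dom_wins_nse[OF less.prems(5)] .
  show ?case
  proof (cases "dom_end V E P B")
    case True
    thus ?thesis by (rule dom_wins.ended[OF nse])
  next
    case nde: False
    show ?thesis
    proof (rule dom_wins.sepy_move[OF nse nde], intro allI impI)
      fix v c assume lg: "legal_move V E P B v c"
      define P' where "P' = fst (do_move P B v c)"
      define B' where "B' = snd (do_move P B v c)"
      have v: "v \<in> V" "v \<notin> P" "v \<notin> B" using lg by (auto simp: legal_move_def)
      have P'V: "P' \<subseteq> V" and B'V: "B' \<subseteq> V" using do_sub[OF less.prems(1,2) v(1), of c] unfolding P'_def B'_def by auto
      have dj': "P' \<inter> B' = {}" using do_disj[OF less.prems(3) v(2,3), of c] unfolding P'_def B'_def by auto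
      have mono': "P \<subseteq> P'" "B \<subseteq> B'" using do_mono[of P B v c] unfolding P'_def B'_def by auto
      have un': "P' \<union> B' = insert v (P \<union> B)" using union_do[of P B v c] unfolding P'_def B'_def by auto
      have cs': "colset c P' B' = insert v (colset c P B)" using colset_do_same[of c P B v] unfolding P'_def B'_def by auto
      have co': "colset (opp c) P' B' = colset (opp c) P B" using colset_do_opp[of c P B v] unfolding P'_def B'_def by auto
      have card1: "card (V - (P' \<union> B')) < card (V - (P \<union> B))"
        using card_dec[OF finV v(1), of "P \<union> B" "P' \<union> B'"] v un' by auto
      have "dom_wins V E True True False P' B'"
      proof (cases "v \<in> C")
        case vC: True
        have lgC: "legal_move C (restrict_edges E C) (P \<inter> C) (B \<inter> C) v c"
          using legal_C[OF cl CV vC] lg by auto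
        have st: "dom_wins C (restrict_edges E C) False True False (P' \<inter> C) (B' \<inter> C)"
        proof -
          have "dom_wins C (restrict_edges E C) False True False
             (fst (do_move (P \<inter> C) (B \<inter> C) v c)) (snd (do_move (P \<inter> C) (B \<inter> C) v c))"
            using sepy_next[OF less.prems(5) lgC] legal_notend[OF lgC] by blast
          then show ?thesis using do_inter_in[OF vC, of P B c] P'_def B'_def by simp
        qed
        have K': "Kout V E C P' B'" using Kout_mono[OF less.prems(4) mono'] un' vC by auto
        have nse': "\<not> sepy_end V E P' B'"
          using H_nse[OF sg cl K' dj'] dom_wins_nse[OF st] .
        show ?thesis
        proof (cases "dom_end V E P' B'")
          case True
          thus ?thesis by (rule dom_wins.ended[OF nse'])
        next
          case nde': False
          from dom_next[OF st] show ?thesis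
          proof (elim disjE exE conjE)
            assume h1: "\<not> sepy_end C (restrict_edges E C) (P' \<inter> C) (B' \<inter> C)"
              and h2: "dom_end C (restrict_edges E C) (P' \<inter> C) (B' \<inter> C)"
            have st2: "dom_wins C (restrict_edges E C) False False False (P' \<inter> C) (B' \<inter> C)"
              by (rule dom_wins.ended[OF h1 h2])
            have "dom_wins V E True False False P' B'"
              using IH[OF card1 P'V B'V dj' K' st2] .
            thus ?thesis by (rule dom_wins.dom_passes[OF nse' nde' TrueI not_False_eq_True[THEN iffD2, OF TrueI]])
          next
            fix w d
            assume lgwC: "legal_move C (restrict_edges E C) (P' \<inter> C) (B' \<inter> C) w d"
              and stw: "dom_wins C (restrict_edges E C) False False False
                 (fst (do_move (P' \<inter> C) (B' \<inter> C) w d)) (snd (do_move (P' \<inter> C) (B' \<inter> C) w d))"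
            have wC: "w \<in> C" using lgwC by (auto simp: legal_move_def)
            have lgw: "legal_move V E P' B' w d" using legal_C[OF cl CV wC] lgwC by auto
            define P'' where "P'' = fst (do_move P' B' w d)"
            define B'' where "B'' = snd (do_move P' B' w d)"
            have w: "w \<in> V" "w \<notin> P'" "w \<notin> B'" using lgw by (auto simp: legal_move_def)
            have P''V: "P'' \<subseteq> V" and B''V: "B'' \<subseteq> V" using do_sub[OF P'V B'V w(1), of d] unfolding P''_def B''_def by auto
            have dj'': "P'' \<inter> B'' = {}" using do_disj[OF dj' w(2,3), of d] unfolding P''_def B''_def by auto
            have mono'': "P' \<subseteq> P''" "B' \<subseteq> B''" using do_mono[of P' B' w d] unfolding P''_def B''_def by auto
            have un'': "P'' \<union> B'' = insert w (P' \<union> B')" using union_do[of P' B' w d] unfolding P''_def B''_def by auto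
            have card2: "card (V - (P'' \<union> B'')) < card (V - (P \<union> B))"
              using card_dec[OF finV v(1), of "P \<union> B" "P'' \<union> B''"] v un'' un' by auto
            have K'': "Kout V E C P'' B''" using Kout_mono[OF K' mono''] un'' wC by auto
            have st3: "dom_wins C (restrict_edges E C) False False False (P'' \<inter> C) (B'' \<inter> C)"
              using stw do_inter_in[OF wC, of P' B' d] P''_def B''_def by simp
            have "dom_wins V E True False False P'' B''" using IH[OF card2 P''V B''V dj'' K'' st3] .
            thus ?thesis unfolding P''_def B''_def by (rule dom_wins.dom_move[OF nse' nde' lgw])
          qed
        qed
      next
        case vC: False
        have st: "dom_wins C (restrict_edges E C) False False fc (P' \<inter> C) (B' \<inter> C)"
          using less.prems(5) do_inter_out[OF vC, of P B c] P'_def B'_def by simp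
        have nseC: "\<not> sepy_end C (restrict_edges E C) (P \<inter> C) (B \<inter> C)" using dom_wins_nse[OF less.prems(5)] .
        have nse': "\<not> sepy_end V E P' B'"
          using nse_out[OF sg iso cl vC lg less.prems(4) less.prems(3) nseC] unfolding P'_def B'_def .
        show ?thesis
        proof (cases "dom_end V E P' B'")
          case True
          thus ?thesis by (rule dom_wins.ended[OF nse'])
        next
          case nde': False
          show ?thesis
          proof (cases "cnbhd E v \<inter> colset (opp c) P' B' \<noteq> {}")
            case True
            have K': "Kout V E C P' B'"
              unfolding Kout_def
            proof (intro ballI impI)
              fix w assume w: "w \<in> V - C" and wc: "w \<in> P' \<union> B'"
              show "\<forall>d. cnbhd E w \<inter> colset d P' B' \<noteq> {}"
              proof (cases "w = v")
                case True
                have "cnbhd E w \<inter> colset c P' B' \<noteq> {}" using True cs' in_cnbhd[of w E] by blast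
                show ?thesis
                proof
                  fix d show "cnbhd E w \<inter> colset d P' B' \<noteq> {}"
                    using color_cases[of d c] True \<open>cnbhd E v \<inter> colset (opp c) P' B' \<noteq> {}\<close>
                      \<open>cnbhd E w \<inter> colset c P' B' \<noteq> {}\<close> by auto
                qed
              next
                case False
                hence "w \<in> P \<union> B" using wc un' by auto
                hence h: "\<forall>d. cnbhd E w \<inter> colset d P B \<noteq> {}" using less.prems(4) w unfolding Kout_def by blast
                show ?thesis
                proof
                  fix d show "cnbhd E w \<inter> colset d P' B' \<noteq> {}"
                    using h[rule_format, of d] colset_mono[OF mono', of d] by blast
                qed
              qed
            qed
            have "dom_wins V E True False False P' B'" using IH[OF card1 P'V B'V dj' K' st] .
            thus ?thesis by (rule dom_wins.dom_passes[OF nse' nde' TrueI not_False_eq_True[THEN iffD2, OF TrueI]])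
          next
            case False
            hence miss: "cnbhd E v \<inter> colset (opp c) P' B' = {}" by simp
            obtain z where z: "z \<in> cnbhd E v" "z \<notin> P' \<union> B'"
            proof -
              have "\<not> cnbhd E v \<subseteq> P' \<union> B'"
              proof
                assume "cnbhd E v \<subseteq> P' \<union> B'"
                hence "cnbhd E v \<subseteq> colset c P' B'" using miss PB_colsets[of P' B' c] by blast
                thus False using nse' v(1) by (auto simp: sepy_end_iff)
              qed
              thus ?thesis using that by blast
            qed
            have zv: "z \<noteq> v" using z un' by auto
            have Evz: "E v z" using z zv by (auto simp: mem_cnbhd)
            have zV: "z \<in> V" using EV[OF Evz] .
            have zC: "z \<notin> C" using out_nbr[OF cl sg vC Evz] .
            have lgz: "legal_move V E P' B' z (opp c)"
              unfolding legal_move_def using zV z(2) miss sym[OF Evz] by (auto simp: mem_cnbhd)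
            define P'' where "P'' = fst (do_move P' B' z (opp c))"
            define B'' where "B'' = snd (do_move P' B' z (opp c))"
            have P''V: "P'' \<subseteq> V" and B''V: "B'' \<subseteq> V" using do_sub[OF P'V B'V zV, of "opp c"] unfolding P''_def B''_def by auto
            have dj'': "P'' \<inter> B'' = {}" using do_disj[OF dj', of z "opp c"] z(2) unfolding P''_def B''_def by auto
            have mono'': "P' \<subseteq> P''" "B' \<subseteq> B''" using do_mono[of P' B' z "opp c"] unfolding P''_def B''_def by auto
            have un'': "P'' \<union> B'' = insert z (P' \<union> B')" using union_do[of P' B' z "opp c"] unfolding P''_def B''_def by auto
            have cs'': "colset (opp c) P'' B'' = insert z (colset (opp c) P' B')"
              using colset_do_same[of "opp c" P' B' z] unfolding P''_def B''_def by auto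
            have co'': "colset c P'' B'' = colset c P' B'"
              using colset_do_opp[of "opp c" P' B' z] unfolding P''_def B''_def by auto
            have card2: "card (V - (P'' \<union> B'')) < card (V - (P \<union> B))"
              using card_dec[OF finV v(1), of "P \<union> B" "P'' \<union> B''"] v un'' un' by auto
            have K'': "Kout V E C P'' B''"
              unfolding Kout_def
            proof (intro ballI impI)
              fix w assume w: "w \<in> V - C" and wc: "w \<in> P'' \<union> B''"
              show "\<forall>d. cnbhd E w \<inter> colset d P'' B'' \<noteq> {}"
              proof (cases "w = v \<or> w = z")
                case True
                have a: "v \<in> cnbhd E w" "z \<in> cnbhd E w" using True Evz sym[OF Evz] by (auto simp: mem_cnbhd)
                have "v \<in> colset c P'' B''" "z \<in> colset (opp c) P'' B''" using cs'' co'' cs' by auto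
                hence b: "v \<in> colset c P'' B''" "z \<in> colset (opp c) P'' B''" .
                show ?thesis
                proof
                  fix d show "cnbhd E w \<inter> colset d P'' B'' \<noteq> {}"
                    using color_cases[of d c] a b by auto
                qed
              next
                case False
                hence "w \<in> P \<union> B" using wc un' un'' by auto
                hence h: "\<forall>d. cnbhd E w \<inter> colset d P B \<noteq> {}" using less.prems(4) w unfolding Kout_def by blast
                show ?thesis
                proof
                  fix d show "cnbhd E w \<inter> colset d P'' B'' \<noteq> {}"
                    using h[rule_format, of d] colset_mono[OF order_trans[OF mono'(1) mono''(1)]
                    order_trans[OF mono'(2) mono''(2)], of d] by blast
                qed
              qed
            qed
            have st3: "dom_wins C (restrict_edges E C) False False fc (P'' \<inter> C) (B'' \<inter> C)"
              using st do_inter_out[OF zC, of P' B' "opp c"] P''_def B''_def by simp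
            have "dom_wins V E True False False P'' B''" using IH[OF card2 P''V B''V dj'' K'' st3] .
            thus ?thesis unfolding P''_def B''_def by (rule dom_wins.dom_move[OF nse' nde' lgz])
          qed
        qed
      qed
      thus "dom_wins V E True True False (fst (do_move P B v c)) (snd (do_move P B v c))"
        using P'_def B'_def by simp
    qed
  qed
qed


lemma part1:
  assumes sg: "simple_graph V E" and iso: "isolate_free V E"
  shows "sepy_start_win V E True"
proof -
  have st: "dom_wins {} (restrict_edges E {}) False False True ({} \<inter> {}) ({} \<inter> {})"
    by (rule dom_wins.ended) (auto simp: sepy_end_def dom_end_def)
  have K: "Kout V E {} {} {}" by (simp add: Kout_def)
  have "dom_wins V E True False True {} {}"
    by (rule L[OF sg iso _ _ _ _ _ K st]) (auto simp: closedC_def)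
  thus ?thesis by (simp add: sepy_start_win_def)
qed

lemma part2:
  assumes sg: "simple_graph V E" and iso: "isolate_free V E" and dc: "dom_win_component V E C"
  shows "dom_start_win V E True"
proof -
  have comp: "component V E C" and dw: "dom_wins C (restrict_edges E C) False True True {} {}"
    using dc by (auto simp: dom_win_component_def dom_start_win_def)
  have CV: "C \<subseteq> V" and Cne: "C \<noteq> {}" and cl: "closedC E C"
    using comp by (auto simp: component_def closedC_def)
  have nde0: "\<not> dom_end C (restrict_edges E C) {} {}" using Cne by (auto simp: dom_end_def)
  obtain w d where lgwC: "legal_move C (restrict_edges E C) {} {} w d"
    and stw: "dom_wins C (restrict_edges E C) False False False (fst (do_move {} {} w d)) (snd (do_move {} {} w d))"
    using dom_next[OF dw] nde0 by blast
  have wC: "w \<in> C" using lgwC by (auto simp: legal_move_def)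
  have lgw: "legal_move V E {} {} w d" using legal_C[OF cl CV wC, of "{}" "{}" d] lgwC by simp
  have nse: "\<not> sepy_end V E {} {}" by (auto simp: sepy_end_def cnbhd_def)
  have nde: "\<not> dom_end V E {} {}" using Cne CV by (auto simp: dom_end_def)
  define P' where "P' = fst (do_move {} {} w d)"
  define B' where "B' = snd (do_move {} {} w d)"
  have wV: "w \<in> V" using wC CV by blast
  have P'V: "P' \<subseteq> V" and B'V: "B' \<subseteq> V" using do_sub[of "{}" V "{}" w d] wV unfolding P'_def B'_def by auto
  have dj: "P' \<inter> B' = {}" using do_disj[of "{}" "{}" w d] unfolding P'_def B'_def by auto
  have un: "P' \<union> B' = {w}" using union_do[of "{}" "{}" w d] unfolding P'_def B'_def by auto
  have K: "Kout V E C P' B'" unfolding Kout_def un using wC by auto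
  have st: "dom_wins C (restrict_edges E C) False False False (P' \<inter> C) (B' \<inter> C)"
    using stw do_inter_in[OF wC, of "{}" "{}" d] unfolding P'_def B'_def by simp
  have "dom_wins V E True False False P' B'" by (rule L[OF sg iso CV cl P'V B'V dj K st])
  hence "dom_wins V E True False False (fst (do_move {} {} w d)) (snd (do_move {} {} w d))"
    unfolding P'_def B'_def .
  hence "dom_wins V E True True True {} {}" by (rule dom_wins.dom_move[OF nse nde lgw])
  thus ?thesis by (simp add: dom_start_win_def)
qed

theorem mainTheorem7:
  fixes V :: "'a set" and E :: "'a \<Rightarrow> 'a \<Rightarrow> bool"
  assumes "simple_graph V E" and "isolate_free V E"
  shows "sepy_start_win V E True \<and>
         ((\<exists>C. dom_win_component V E C) \<longrightarrow> dom_start_win V E True)"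
proof -
  have a: "sepy_start_win V E True" by (rule part1[OF assms])
  have b: "(\<exists>C. dom_win_component V E C) \<longrightarrow> dom_start_win V E True"
  proof
    assume "\<exists>C. dom_win_component V E C"
    then obtain C where "dom_win_component V E C" by blast
    then show "dom_start_win V E True" by (rule part2[OF assms])
  qed
  from a b show ?thesis by (rule conjI)
qed

end
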